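(* Let $d\ge 2$ and $m\ge 1$. Let $h_0,\ldots,h_{m-1}$ be $m$ distinct hyperplanes in $\mathbb{R}^d$ that all contain a common $(d-2)$-flat $\ell$, dividing $\mathbb{R}^d$ into $2m$ parts (the connected components of the complement of their union). Let $P=\{p_0,\ldots,p_{2m-1}\}$ consist of $2m$ points, one from each part. Then at least $\frac{(m+1)m(m-1)}{3}$ of the triangles with vertices in $P$ intersect $\ell$.
   Context: A $(d-2)$-flat is a $(d-2)$-dimensional affine subspace of $\mathbb{R}^d$. A triangle with vertices in $P$ is the closed convex hull of a $3$-element subset of $P$. *)

theory Defs
  imports "HOL-Analysis.Analysis"
begin

definition is_hyperplane :: "'a::euclidean_space set \<Rightarrow> bool" where
  "is_hyperplane H \<longleftrightarrow> (\<exists>a b. a \<noteq> 0 \<and> H = {x. a \<bullet> x = b})"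

end

theory Submission
  imports Defs
begin


definition hit2 :: "('a \<Rightarrow> real) \<Rightarrow> ('a \<Rightarrow> real) \<Rightarrow> 'a set \<Rightarrow> bool" where
  "hit2 Y1 Y2 T \<longleftrightarrow> (\<exists>x y z a b c. T = {x,y,z} \<and> 0 \<le> a \<and> 0 \<le> b \<and> 0 \<le> c \<and> a+b+c = 1 \<and>
     a * Y1 x + b * Y1 y + c * Y1 z = 0 \<and> a * Y2 x + b * Y2 y + c * Y2 z = 0)"

lemma aux_id: "(s::real) * s = 1 \<Longrightarrow> (Y1p * Y1q + Y2p * Y2q) * (a * Y1p + b * Y2p) + s * (Y1p * Y2q - Y2p * Y1q) * (a * (- s * Y2p) + b * (s * Y1p)) = (a * Y1q + b * Y2q) * (Y1p ^ 2 + Y2p ^ 2)"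
  by algebra

lemma three_distinct: "card {x,y,z} = 3 \<Longrightarrow> x \<noteq> y \<and> y \<noteq> z \<and> x \<noteq> z"
proof (intro conjI notI)
  assume c: "card {x,y,z} = 3"
  { assume "x = y" hence "card {x,y,z} \<le> 2" by (simp add: card_insert_le_m1 card_insert_if)
    thus False using c by simp }
  { assume "y = z" hence "card {x,y,z} \<le> 2" by (simp add: card_insert_le_m1 card_insert_if)
    thus False using c by simp }
  { assume "x = z" hence "card {x,y,z} \<le> 2" by (simp add: card_insert_le_m1 card_insert_if)
    thus False using c by simp }
qed

lemma choose2_real: "real (n choose 2) = real n * (real n - 1) / 2"
proof (induction n)
  case 0 then show ?case by simp
next
  case (Suc n)
  have "Suc n choose 2 = (n choose 1) + (n choose 2)" using binomial_Suc_Suc[of n 1] by (simp add: numeral_2_eq_2)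
  hence "real (Suc n choose 2) = real n + real (n choose 2)" by simp
  then show ?case using Suc by (simp add: field_simps)
qed
lemma choose3_real: "real (n choose 3) = real n * (real n - 1) * (real n - 2) / 6"
proof (induction n)
  case 0 then show ?case by simp
next
  case (Suc n)
  have "Suc n choose 3 = (n choose 2) + (n choose 3)" using binomial_Suc_Suc[of n 2] by (simp add: numeral_3_eq_3 numeral_2_eq_2)
  hence "real (Suc n choose 3) = real (n choose 2) + real (n choose 3)" by simp
  then show ?case using Suc choose2_real[of n] by (simp add: field_simps)
qed

locale core =
  fixes P :: "'a set" and Y1 Y2 :: "'a \<Rightarrow> real" and u v :: "nat \<Rightarrow> real" and m :: nat
  assumes m1: "m \<ge> 1" and finP: "finite P" and cardP: "card P = 2*m"
  and Fnz: "\<And>p i. p\<in>P \<Longrightarrow> i<m \<Longrightarrow> u i * Y1 p + v i * Y2 p \<noteq> 0"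
  and injs: "\<And>p q. p\<in>P \<Longrightarrow> q\<in>P \<Longrightarrow> (\<And>i. i<m \<Longrightarrow> (u i * Y1 p + v i * Y2 p > 0) = (u i * Y1 q + v i * Y2 q > 0)) \<Longrightarrow> p = q"
begin

lemma pos_mult_iff: "a > 0 \<Longrightarrow> (0 < a*b) = (0 < (b::real))" by (auto simp: zero_less_mult_iff)

definition F where "F i x = u i * Y1 x + v i * Y2 x"
definition cr where "cr p q = Y1 p * Y2 q - Y2 p * Y1 q"
definition K :: "real \<Rightarrow> 'a \<Rightarrow> 'a set" where "K s p = {q\<in>P. s * cr p q > 0}"
definition Z where "Z p = {q\<in>P. q \<noteq> p \<and> cr p q = 0}"

lemma nz: "p \<in> P \<Longrightarrow> Y1 p ^ 2 + Y2 p ^ 2 > 0"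
proof -
  assume p: "p \<in> P"
  have "u 0 * Y1 p + v 0 * Y2 p \<noteq> 0" using Fnz[OF p, of 0] m1 by auto
  hence "Y1 p \<noteq> 0 \<or> Y2 p \<noteq> 0" by auto
  thus ?thesis by (metis add_pos_nonneg add_nonneg_pos zero_le_power2 zero_less_power2)
qed

lemma injF: "p\<in>P \<Longrightarrow> q\<in>P \<Longrightarrow> (\<And>i. i<m \<Longrightarrow> (F i p > 0) = (F i q > 0)) \<Longrightarrow> p = q"
  using injs unfolding F_def by blast

lemma FnzF: "p\<in>P \<Longrightarrow> i<m \<Longrightarrow> F i p \<noteq> 0"
  using Fnz unfolding F_def by blast

lemma par:
  assumes p: "p \<in> P" and c: "cr p q = 0"
  and ld: "lam * (Y1 p ^ 2 + Y2 p ^ 2) = Y1 p * Y1 q + Y2 p * Y2 q"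
  shows "Y1 q = lam * Y1 p" "Y2 q = lam * Y2 p" "F i q = lam * F i p"
proof -
  have N: "Y1 p ^ 2 + Y2 p ^ 2 > 0" using nz p by auto
  have c': "Y1 p * Y2 q = Y2 p * Y1 q" using c by (simp add: cr_def)
  have "(Y1 q - lam * Y1 p) * (Y1 p ^ 2 + Y2 p ^ 2) = Y1 q * (Y1 p ^ 2 + Y2 p ^ 2) - Y1 p * (lam * (Y1 p ^ 2 + Y2 p ^ 2))"
    by (simp add: algebra_simps)
  also have "\<dots> = Y2 p * (Y2 p * Y1 q - Y1 p * Y2 q)" unfolding ld by (simp add: algebra_simps power2_eq_square)
  also have "\<dots> = 0" using c' by simp
  finally have "Y1 q - lam * Y1 p = 0" using N by (metis mult_eq_0_iff order_less_irrefl)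
  thus 1: "Y1 q = lam * Y1 p" by simp
  have "(Y2 q - lam * Y2 p) * (Y1 p ^ 2 + Y2 p ^ 2) = Y2 q * (Y1 p ^ 2 + Y2 p ^ 2) - Y2 p * (lam * (Y1 p ^ 2 + Y2 p ^ 2))"
    by (simp add: algebra_simps)
  also have "\<dots> = Y1 p * (Y1 p * Y2 q - Y2 p * Y1 q)" unfolding ld by (simp add: algebra_simps power2_eq_square)
  also have "\<dots> = 0" using c' by simp
  finally have "Y2 q - lam * Y2 p = 0" using N by (metis mult_eq_0_iff order_less_irrefl)
  thus 2: "Y2 q = lam * Y2 p" by simp
  show "F i q = lam * F i p" unfolding F_def 1 2 by (simp add: algebra_simps)
qed

lemma opp:
  assumes p: "p \<in> P" and q: "q \<in> P" and qp: "q \<noteq> p" and c: "cr p q = 0"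
  shows "\<exists>lam<0. Y1 q = lam * Y1 p \<and> Y2 q = lam * Y2 p \<and> (\<forall>i. F i q = lam * F i p)"
proof -
  define lam where "lam = (Y1 p * Y1 q + Y2 p * Y2 q) / (Y1 p ^ 2 + Y2 p ^ 2)"
  have N: "Y1 p ^ 2 + Y2 p ^ 2 > 0" using nz p by auto
  have ld: "lam * (Y1 p ^ 2 + Y2 p ^ 2) = Y1 p * Y1 q + Y2 p * Y2 q" unfolding lam_def using N by simp
  note e = par[OF p c ld]
  have "lam \<noteq> 0" using FnzF[OF q, of 0] m1 e(3)[of 0] by auto
  moreover have "\<not> lam > 0"
  proof
    assume "lam > 0"
    hence "\<And>i. i<m \<Longrightarrow> (F i p > 0) = (F i q > 0)" using e(3) by (simp add: zero_less_mult_iff)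
    hence "p = q" using injF p q by blast
    thus False using qp by simp
  qed
  ultimately have "lam < 0" by linarith
  show ?thesis apply (rule exI[of _ lam]) using e \<open>lam < 0\<close> by blast
qed

lemma opp_sign:
  assumes p: "p \<in> P" and q: "q \<in> P" and qp: "q \<noteq> p" and c: "cr p q = 0" and i: "i < m"
  shows "(F i q > 0) = (\<not> F i p > 0)"
proof -
  obtain lam where l: "lam < 0" "\<forall>i. F i q = lam * F i p" using opp[OF p q qp c] by blast
  have e: "F i q = lam * F i p" using l(2) by blast
  have nz: "F i p \<noteq> 0" using FnzF[OF p i] .
  show ?thesis
  proof (cases "F i p > 0")
    case True
    then show ?thesis using e l(1) mult_neg_pos[of lam "F i p"] by simp
  next
    case False
    then have "F i p < 0" using nz by linarith
    then show ?thesis using e l(1) mult_neg_neg[of lam "F i p"] False by simp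
  qed
qed

lemma Z_le1: assumes p: "p \<in> P" shows "card (Z p) \<le> 1"
proof -
  have "finite (Z p)" using finP by (simp add: Z_def)
  moreover have "\<forall>a\<in>Z p. \<forall>b\<in>Z p. a = b"
  proof (intro ballI)
    fix a b assume a: "a \<in> Z p" and b: "b \<in> Z p"
    show "a = b"
    proof (rule injF)
      show "a \<in> P" "b \<in> P" using a b by (auto simp: Z_def)
      fix i assume i: "i < m"
      have "(F i a > 0) = (\<not> F i p > 0)" using a by (intro opp_sign[OF p _ _ _ i]) (auto simp: Z_def)
      moreover have "(F i b > 0) = (\<not> F i p > 0)" using b by (intro opp_sign[OF p _ _ _ i]) (auto simp: Z_def)
      ultimately show "(F i a > 0) = (F i b > 0)" by simp
    qed
  qed
  ultimately show ?thesis using card_le_Suc0_iff_eq[of "Z p"] by simp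
qed


lemma Kfin: "finite (K s p)" using finP by (simp add: K_def)
lemma KP: "K s p \<subseteq> P" by (auto simp: K_def)
lemma Zfin: "finite (Z p)" using finP by (simp add: Z_def)
lemma crself: "cr p p = 0" by (simp add: cr_def)
lemma cr_anti: "cr q p = - cr p q" by (simp add: cr_def)

lemma K_bound:
  assumes p: "p \<in> P" and s: "s = 1 \<or> s = -1"
  shows "card (K s p) \<le> m" "Z p \<noteq> {} \<Longrightarrow> card (K s p) \<le> m - 1"
proof -
  define N where "N = Y1 p ^ 2 + Y2 p ^ 2"
  have N: "N > 0" using nz p by (simp add: N_def)
  have ss: "s * s = 1" using s by auto
  define d where "d i = u i * (- s * Y2 p) + v i * (s * Y1 p)" for i
  define tau where "tau i = - d i / F i p" for i
  define t where "t q = (Y1 p * Y1 q + Y2 p * Y2 q) / (s * cr p q)" for q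
  define A where "A q = {i\<in>{..<m}. tau i < t q}" for q
  define cnt where "cnt q = card (A q)" for q
  have Afin: "finite (A q)" for q by (simp add: A_def)
  have Asub: "A q \<subseteq> {..<m}" for q by (auto simp: A_def)
  have sgn: "(F i q > 0) = ((F i p > 0) = (tau i < t q))" if q: "q \<in> K s p" and i: "i < m" for q i
  proof -
    have qP: "q \<in> P" and pos: "s * cr p q > 0" using q by (auto simp: K_def)
    have c: "F i p \<noteq> 0" using FnzF[OF p i] .
    have fq: "F i q \<noteq> 0" using FnzF[OF qP i] .
    have nz': "s * cr p q \<noteq> 0" using pos by linarith
    have st: "(s * cr p q) * t q = Y1 p * Y1 q + Y2 p * Y2 q" unfolding t_def
      by (simp only: times_divide_eq_right) (rule nonzero_mult_div_cancel_left[OF nz'])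
    have fpt: "F i p * (t q - tau i) = F i p * t q + d i" unfolding tau_def using c by (simp add: field_simps)
    have "(s * cr p q) * (F i p * (t q - tau i)) = F i p * ((s * cr p q) * t q) + (s * cr p q) * d i"
      unfolding fpt by (simp add: algebra_simps)
    also have "\<dots> = F i q * N"
      unfolding st unfolding d_def F_def N_def cr_def using aux_id[OF ss, of "Y1 p" "Y1 q" "Y2 p" "Y2 q" "u i" "v i"]
      by (simp add: algebra_simps)
    finally have id: "(s * cr p q) * (F i p * (t q - tau i)) = F i q * N" .
    have "(F i q > 0) = (F i q * N > 0)" using N by (simp add: zero_less_mult_iff)
    also have "\<dots> = (F i p * (t q - tau i) > 0)" unfolding id[symmetric] using pos_mult_iff[OF pos] .
    finally have e: "(F i q > 0) = (F i p * (t q - tau i) > 0)" .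
    have "t q \<noteq> tau i" using id fq N by auto
    thus ?thesis unfolding e using c by (auto simp: zero_less_mult_iff)
  qed
  have key: "q = q'" if q: "q \<in> K s p" and q': "q' \<in> K s p" and le: "t q \<le> t q'"
      and ceq: "cnt q = cnt q'" for q q'
  proof -
    have "A q \<subseteq> A q'" using le by (auto simp: A_def)
    hence AA: "A q = A q'" using ceq Afin unfolding cnt_def by (simp add: card_subset_eq)
    show "q = q'"
    proof (rule injF)
      show "q \<in> P" "q' \<in> P" using q q' KP by auto
      fix i assume i: "i < m"
      have "(tau i < t q) = (tau i < t q')" using AA i unfolding A_def by blast
      thus "(F i q > 0) = (F i q' > 0)" using sgn[OF q i] sgn[OF q' i] by simp
    qed
  qed
  have inj: "inj_on cnt (K s p)"
  proof (rule inj_onI)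
    fix q q' assume "q \<in> K s p" "q' \<in> K s p" "cnt q = cnt q'"
    thus "q = q'" using key[of q q'] key[of q' q] by (cases "t q \<le> t q'") auto
  qed
  have notm: "cnt q \<noteq> m" if q: "q \<in> K s p" for q
  proof
    assume "cnt q = m"
    hence "A q = {..<m}" using Asub[of q] unfolding cnt_def by (simp add: card_subset_eq)
    hence "q = p"
      using sgn[OF q] subsetD[OF KP q] p unfolding A_def by (intro injF) auto
    thus False using q by (simp add: K_def crself)
  qed
  have ltm: "cnt q < m" if q: "q \<in> K s p" for q
  proof -
    have "cnt q \<le> m" unfolding cnt_def using card_mono[OF _ Asub[of q]] by simp
    thus ?thesis using notm[OF q] by simp
  qed
  show "card (K s p) \<le> m"
  proof -
    have "card (K s p) \<le> card {..<m}"
      by (rule card_inj_on_le[OF inj]) (use ltm in auto)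
    thus ?thesis by simp
  qed
  assume "Z p \<noteq> {}"
  then obtain q0 where q0: "q0 \<in> Z p" by blast
  have q0P: "q0 \<in> P" and q0p: "q0 \<noteq> p" and crq0: "cr p q0 = 0" using q0 by (auto simp: Z_def)
  have not0: "cnt q \<noteq> 0" if q: "q \<in> K s p" for q
  proof
    assume "cnt q = 0"
    hence "A q = {}" using Afin[of q] unfolding cnt_def by simp
    hence "\<And>i. i < m \<Longrightarrow> \<not> tau i < t q" unfolding A_def by blast
    hence "q = q0"
      using sgn[OF q] subsetD[OF KP q] opp_sign[OF p q0P q0p crq0] q0P by (intro injF) auto
    thus False using q crq0 by (simp add: K_def)
  qed
  have "card (K s p) \<le> card {1..<m}"
    by (rule card_inj_on_le[OF inj]) (use ltm not0 in force)+
  thus "card (K s p) \<le> m - 1" by simp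
qed

lemma partition:
  assumes p: "p \<in> P"
  shows "card (K 1 p) + card (K (-1) p) + card (Z p) = 2*m - 1"
proof -
  have eq: "P - {p} = (K 1 p \<union> K (-1) p) \<union> Z p"
    using crself by (auto simp: K_def Z_def)
  have d1: "K 1 p \<inter> K (-1) p = {}" by (auto simp: K_def)
  have d2: "(K 1 p \<union> K (-1) p) \<inter> Z p = {}" by (auto simp: K_def Z_def)
  have "card (P - {p}) = 2*m - 1" using p finP cardP by simp
  moreover have "card (P - {p}) = card (K 1 p) + card (K (-1) p) + card (Z p)"
    unfolding eq by (simp add: card_Un_disjoint[OF _ _ d2] card_Un_disjoint[OF _ _ d1] Kfin Zfin)
  ultimately show ?thesis by simp
qed

lemma kval:
  assumes p: "p \<in> P"
  shows "card (K 1 p) = m - 1 \<or> card (K 1 p) = m"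
proof (cases "Z p = {}")
  case True
  have z: "card (Z p) = 0" using True by simp
  have "card (K 1 p) \<le> m" "card (K (-1) p) \<le> m" using K_bound(1)[OF p, of 1] K_bound(1)[OF p, of "-1"] by simp_all
  with partition[OF p] z m1 show ?thesis by linarith
next
  case False
  have "card (Z p) > 0" using False Zfin[of p] by (simp add: card_gt_0_iff)
  hence z: "card (Z p) = 1" using Z_le1[OF p] by linarith
  have "card (K 1 p) \<le> m - 1" "card (K (-1) p) \<le> m - 1" using K_bound(2)[OF p, of 1 ] K_bound(2)[OF p, of "-1"] False by simp_all
  with partition[OF p] z m1 show ?thesis by linarith
qed

lemma src_aux:
  assumes p: "p \<in> P" and cy: "cr p y > 0" and cz: "cr p z > 0"
    and w: "a \<ge> 0" "b \<ge> 0" "c \<ge> 0" "a + b + c = 1"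
    and e1: "a * Y1 p + b * Y1 y + c * Y1 z = 0" and e2: "a * Y2 p + b * Y2 y + c * Y2 z = 0"
  shows False
proof -
  have "b * cr p y + c * cr p z = Y1 p * (a * Y2 p + b * Y2 y + c * Y2 z) - Y2 p * (a * Y1 p + b * Y1 y + c * Y1 z)"
    by (simp add: cr_def algebra_simps)
  hence s0: "b * cr p y + c * cr p z = 0" using e1 e2 by simp
  have "b * cr p y \<ge> 0" "c * cr p z \<ge> 0" using w cy cz by auto
  hence "b * cr p y = 0" "c * cr p z = 0" using s0 by linarith+
  hence "b = 0" "c = 0" using cy cz by auto
  hence "a = 1" using w by simp
  hence "Y1 p = 0" "Y2 p = 0" using e1 e2 \<open>b = 0\<close> \<open>c = 0\<close> by auto
  thus False using nz[OF p] by simp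
qed

definition src where "src T p \<longleftrightarrow> p \<in> T \<and> (\<forall>q\<in>T-{p}. cr p q > 0)"


lemma nohit_src:
  assumes TP: "T \<subseteq> P" and T3: "card T = 3" and sp: "src T p"
  shows "\<not> hit2 Y1 Y2 T"
proof
  assume "hit2 Y1 Y2 T"
  then obtain x y z a b c where T: "T = {x,y,z}" and w: "0 \<le> a" "0 \<le> b" "0 \<le> c" "a+b+c = 1"
    and e1: "a * Y1 x + b * Y1 y + c * Y1 z = 0" and e2: "a * Y2 x + b * Y2 y + c * Y2 z = 0"
    unfolding hit2_def by blast
  have c3: "card {x,y,z} = 3" using T3 T by (simp only:)
  note d0 = three_distinct[OF c3]
  have d: "x \<noteq> y" "y \<noteq> z" "x \<noteq> z" using d0 by blast+
  have pT: "p \<in> T" and sq: "\<And>q. q \<in> T \<Longrightarrow> q \<noteq> p \<Longrightarrow> cr p q > 0" using sp by (auto simp: src_def)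
  have pP: "p \<in> P" using pT TP by auto
  have xT: "x \<in> T" and yT: "y \<in> T" and zT: "z \<in> T" using T by auto
  consider "p = x" | "p = y" | "p = z" using pT T by auto
  then show False
  proof cases
    case 1
    have "cr p y > 0" "cr p z > 0" using sq[OF yT] sq[OF zT] d 1 by auto
    then show False using src_aux[OF pP _ _ w e1[unfolded 1[symmetric]] e2[unfolded 1[symmetric]]] by blast
  next
    case 2
    have f1: "b * Y1 y + a * Y1 x + c * Y1 z = 0" using e1 by linarith
    have f2: "b * Y2 y + a * Y2 x + c * Y2 z = 0" using e2 by linarith
    have "cr p x > 0" "cr p z > 0" using sq[OF xT] sq[OF zT] d 2 by auto
    moreover have "b + a + c = 1" using w by linarith
    ultimately show False using src_aux[OF pP _ _ w(2) w(1) w(3) _ f1[unfolded 2[symmetric]] f2[unfolded 2[symmetric]]] by blast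
  next
    case 3
    have f1: "c * Y1 z + a * Y1 x + b * Y1 y = 0" using e1 by linarith
    have f2: "c * Y2 z + a * Y2 x + b * Y2 y = 0" using e2 by linarith
    have "cr p x > 0" "cr p y > 0" using sq[OF xT] sq[OF yT] d 3 by auto
    moreover have "c + a + b = 1" using w by linarith
    ultimately show False using src_aux[OF pP _ _ w(3) w(1) w(2) _ f1[unfolded 3[symmetric]] f2[unfolded 3[symmetric]]] by blast
  qed
qed

lemma tourn: "(A::real) \<noteq> 0 \<Longrightarrow> (B::real) \<noteq> 0 \<Longrightarrow> (C::real) \<noteq> 0 \<Longrightarrow> \<not>(A>0 \<and> -C>0) \<Longrightarrow> \<not>(-A>0 \<and> B>0) \<Longrightarrow> \<not>(-B>0 \<and> C>0)
  \<Longrightarrow> (A>0 \<and> B>0 \<and> C>0) \<or> (-C>0 \<and> -B>0 \<and> -A>0)"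
proof -
  assume h: "(A::real) \<noteq> 0" "B \<noteq> 0" "C \<noteq> 0" "\<not>(A>0 \<and> -C>0)" "\<not>(-A>0 \<and> B>0)" "\<not>(-B>0 \<and> C>0)"
  show ?thesis
  proof (cases "A > 0")
    case True
    hence "C > 0" using h(3,4) by linarith
    hence "B > 0" using h(2,6) by linarith
    thus ?thesis using True \<open>C > 0\<close> by blast
  next
    case False
    hence "- A > 0" using h(1) by linarith
    hence "- B > 0" using h(2,5) by linarith
    hence "- C > 0" using h(3,6) by linarith
    thus ?thesis using \<open>- A > 0\<close> \<open>- B > 0\<close> by blast
  qed
qed

lemma hit2_perm: "hit2 Y1 Y2 {x,y,z} \<Longrightarrow> {x,y,z} = {x',y',z'} \<Longrightarrow> hit2 Y1 Y2 {x',y',z'}"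
  by simp

lemma par_hit:
  assumes x: "x \<in> P" and y: "y \<in> P" and xy: "x \<noteq> y" and c: "cr x y = 0"
  shows "hit2 Y1 Y2 {x,y,z}"
proof -
  obtain lam where l: "lam < 0" "Y1 y = lam * Y1 x" "Y2 y = lam * Y2 x"
    using opp[OF x y xy[symmetric] c] by blast
  have d: "1 - lam > 0" using l by simp
  define a where "a = - lam / (1 - lam)"
  define b where "b = 1 / (1 - lam)"
  have a0: "a \<ge> 0" unfolding a_def using l d by (intro divide_nonneg_pos) auto
  have b0: "b \<ge> 0" unfolding b_def using d by simp
  have s: "a + b + 0 = 1" unfolding a_def b_def using d by (simp add: field_simps)
  have e1: "a * Y1 x + b * Y1 y + 0 * Y1 z = 0" unfolding a_def b_def l(2) using d by (simp add: field_simps)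
  have e2: "a * Y2 x + b * Y2 y + 0 * Y2 z = 0" unfolding a_def b_def l(3) using d by (simp add: field_simps)
  show ?thesis unfolding hit2_def
    apply (rule exI[of _ x], rule exI[of _ y], rule exI[of _ z], rule exI[of _ a], rule exI[of _ b], rule exI[of _ 0])
    using a0 b0 s e1 e2 by simp
qed

lemma cyc_hit:
  assumes A: "cr x y > 0" and B: "cr y z > 0" and C: "cr z x > 0"
  shows "hit2 Y1 Y2 {x,y,z}"
proof -
  define S where "S = cr y z + cr z x + cr x y"
  have S: "S > 0" using A B C by (simp add: S_def)
  have i1: "cr y z * Y1 x + cr z x * Y1 y + cr x y * Y1 z = 0" by (simp add: cr_def algebra_simps)
  have i2: "cr y z * Y2 x + cr z x * Y2 y + cr x y * Y2 z = 0" by (simp add: cr_def algebra_simps)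
  define a where "a = cr y z / S"
  define b where "b = cr z x / S"
  define c where "c = cr x y / S"
  have w: "a \<ge> 0" "b \<ge> 0" "c \<ge> 0" unfolding a_def b_def c_def using A B C S by simp_all
  have "a + b + c = (cr y z + cr z x + cr x y) / S" unfolding a_def b_def c_def by (simp add: add_divide_distrib)
  hence s: "a + b + c = 1" unfolding S_def[symmetric] using S by simp
  have e1: "a * Y1 x + b * Y1 y + c * Y1 z = 0"
  proof -
    have "a * Y1 x + b * Y1 y + c * Y1 z = (cr y z * Y1 x + cr z x * Y1 y + cr x y * Y1 z) / S"
      unfolding a_def b_def c_def by (simp add: add_divide_distrib algebra_simps)
    thus ?thesis using i1 by simp
  qed
  have e2: "a * Y2 x + b * Y2 y + c * Y2 z = 0"
  proof -
    have "a * Y2 x + b * Y2 y + c * Y2 z = (cr y z * Y2 x + cr z x * Y2 y + cr x y * Y2 z) / S"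
      unfolding a_def b_def c_def by (simp add: add_divide_distrib algebra_simps)
    thus ?thesis using i2 by simp
  qed
  show ?thesis unfolding hit2_def
    apply (rule exI[of _ x], rule exI[of _ y], rule exI[of _ z], rule exI[of _ a], rule exI[of _ b], rule exI[of _ c])
    using w s e1 e2 by simp
qed

lemma src_hit:
  assumes TP: "T \<subseteq> P" and T3: "card T = 3" and ns: "\<And>p. \<not> src T p"
  shows "hit2 Y1 Y2 T"
proof -
  obtain x y z where T: "T = {x,y,z}" and d: "x \<noteq> y" "y \<noteq> z" "x \<noteq> z"
    using T3 card_3_iff[of T] by auto
  have P: "x \<in> P" "y \<in> P" "z \<in> P" using TP T by auto
  show ?thesis
  proof (cases "cr x y = 0 \<or> cr y z = 0 \<or> cr x z = 0")
    case True
    then consider "cr x y = 0" | "cr y z = 0" | "cr x z = 0" by blast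
    then show ?thesis
    proof cases
      case 1 show ?thesis unfolding T using par_hit[OF P(1) P(2) d(1) 1] .
    next
      case 2 have "hit2 Y1 Y2 {y,z,x}" using par_hit[OF P(2) P(3) d(2) 2] .
      thus ?thesis unfolding T by (simp add: insert_commute)
    next
      case 3 have "hit2 Y1 Y2 {x,z,y}" using par_hit[OF P(1) P(3) d(3) 3] .
      thus ?thesis unfolding T by (simp add: insert_commute)
    qed
  next
    case False
    have n1: "\<not> (cr x y > 0 \<and> cr x z > 0)" using ns[of x] d unfolding src_def T by auto
    have n2: "\<not> (cr y x > 0 \<and> cr y z > 0)" using ns[of y] d unfolding src_def T by auto
    have n3: "\<not> (cr z x > 0 \<and> cr z y > 0)" using ns[of z] d unfolding src_def T by auto
    have a1: "cr y x = - cr x y" "cr z y = - cr y z" "cr x z = - cr z x" using cr_anti by blast+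
    have nz3: "cr x y \<noteq> 0" "cr y z \<noteq> 0" "cr z x \<noteq> 0" using False a1(3) by auto
    have "(cr x y > 0 \<and> cr y z > 0 \<and> cr z x > 0) \<or> (- cr z x > 0 \<and> - cr y z > 0 \<and> - cr x y > 0)"
      using tourn[OF nz3] n1 n2 n3 unfolding a1 by blast
    hence "(cr x y > 0 \<and> cr y z > 0 \<and> cr z x > 0) \<or> (cr x z > 0 \<and> cr z y > 0 \<and> cr y x > 0)"
      unfolding a1 .
    then show ?thesis
    proof
      assume "cr x y > 0 \<and> cr y z > 0 \<and> cr z x > 0"
      thus ?thesis unfolding T using cyc_hit by blast
    next
      assume "cr x z > 0 \<and> cr z y > 0 \<and> cr y x > 0"
      hence "hit2 Y1 Y2 {x,z,y}" using cyc_hit by blast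
      thus ?thesis unfolding T by (simp add: insert_commute)
    qed
  qed
qed

definition NH where "NH = {T. T \<subseteq> P \<and> card T = 3 \<and> (\<exists>p. src T p)}"
definition G where "G p = insert p ` {S. S \<subseteq> K 1 p \<and> card S = 2}"

lemma NH_eq: "NH = (\<Union>p\<in>P. G p)"
proof
  show "NH \<subseteq> (\<Union>p\<in>P. G p)"
  proof
    fix T assume "T \<in> NH"
    then obtain p where TP: "T \<subseteq> P" and T3: "card T = 3" and sp: "src T p" by (auto simp: NH_def)
    have pT: "p \<in> T" using sp by (simp add: src_def)
    have fT: "finite T" using TP finP finite_subset by blast
    have "T - {p} \<subseteq> K 1 p" using sp TP by (auto simp: src_def K_def)
    moreover have "card (T - {p}) = 2" using T3 pT fT by simp
    moreover have "T = insert p (T - {p})" using pT by auto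
    ultimately have "T \<in> G p" unfolding G_def by blast
    thus "T \<in> (\<Union>p\<in>P. G p)" using pT TP by blast
  qed
next
  show "(\<Union>p\<in>P. G p) \<subseteq> NH"
  proof
    fix T assume "T \<in> (\<Union>p\<in>P. G p)"
    then obtain p S where p: "p \<in> P" and S: "S \<subseteq> K 1 p" "card S = 2" and T: "T = insert p S"
      by (auto simp: G_def)
    have pS: "p \<notin> S" using S(1) crself by (auto simp: K_def)
    have fS: "finite S" using S(1) Kfin finite_subset by blast
    have "T \<subseteq> P" using T p S(1) KP by blast
    moreover have "card T = 3" using T pS fS S(2) by simp
    moreover have "src T p" using T S(1) pS by (auto simp: src_def K_def)
    ultimately show "T \<in> NH" by (auto simp: NH_def)
  qed
qed

lemma card_G: "card (G p) = card (K 1 p) choose 2"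
proof -
  have pK: "p \<notin> K 1 p" using crself by (auto simp: K_def)
  have "inj_on (insert p) {S. S \<subseteq> K 1 p \<and> card S = 2}"
  proof (rule inj_onI)
    fix S S' assume "S \<in> {S. S \<subseteq> K 1 p \<and> card S = 2}" "S' \<in> {S. S \<subseteq> K 1 p \<and> card S = 2}"
      "insert p S = insert p S'"
    hence "p \<notin> S" "p \<notin> S'" "insert p S = insert p S'" using pK by blast+
    hence "insert p S - {p} = insert p S' - {p}" by simp
    thus "S = S'" using \<open>p \<notin> S\<close> \<open>p \<notin> S'\<close> by simp
  qed
  hence "card (G p) = card {S. S \<subseteq> K 1 p \<and> card S = 2}" unfolding G_def by (rule card_image)
  also have "\<dots> = card (K 1 p) choose 2" using n_subsets[OF Kfin] .
  finally show ?thesis .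
qed

lemma card_NH: "card NH = (\<Sum>p\<in>P. card (K 1 p) choose 2)"
proof -
  have fG: "\<forall>p\<in>P. finite (G p)"
  proof
    fix p
    have "{S. S \<subseteq> K 1 p \<and> card S = 2} \<subseteq> Pow (K 1 p)" by blast
    hence "finite {S. S \<subseteq> K 1 p \<and> card S = 2}" using Kfin[of 1 p] finite_subset by blast
    thus "finite (G p)" unfolding G_def by (rule finite_imageI)
  qed
  have dj: "\<forall>p\<in>P. \<forall>p'\<in>P. p \<noteq> p' \<longrightarrow> G p \<inter> G p' = {}"
  proof (intro ballI impI)
    fix p p' assume pp: "p \<in> P" "p' \<in> P" "p \<noteq> p'"
    show "G p \<inter> G p' = {}"
    proof (rule ccontr)
      assume "G p \<inter> G p' \<noteq> {}"
      then obtain T where T1: "T \<in> G p" and T2: "T \<in> G p'" by blast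
      obtain S where S: "S \<subseteq> K 1 p" and e1: "T = insert p S" using T1 unfolding G_def by blast
      obtain S' where S': "S' \<subseteq> K 1 p'" and e2: "T = insert p' S'" using T2 unfolding G_def by blast
      have e: "insert p S = insert p' S'" using e1 e2 by (rule trans[OF sym])
      have "p' \<in> insert p S" unfolding e by (rule insertI1)
      hence "p' \<in> S" using pp(3) by simp
      hence "p' \<in> K 1 p" using S by blast
      hence c1: "cr p p' > 0" by (simp add: K_def)
      have "p \<in> insert p' S'" unfolding e[symmetric] by (rule insertI1)
      hence "p \<in> S'" using pp(3) by simp
      hence "p \<in> K 1 p'" using S' by blast
      hence c2: "cr p' p > 0" by (simp add: K_def)
      show False using c1 c2 cr_anti[of p' p] by linarith
    qed
  qed
  show ?thesis unfolding NH_eq using card_UN_disjoint[OF finP fG dj] card_G by simp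
qed

lemma sum_K: "(\<Sum>p\<in>P. card (K 1 p)) \<le> m * (2*m - 1)"
proof -
  have Sg: "(SIGMA p:P. K 1 p) = prod.swap ` (SIGMA q:P. K (-1) q)"
  proof (rule set_eqI)
    fix x :: "'a \<times> 'a"
    obtain p q where x: "x = (p,q)" by (cases x)
    have "cr q p = - cr p q" by (rule cr_anti)
    hence "x \<in> (SIGMA p:P. K 1 p) \<longleftrightarrow> (q,p) \<in> (SIGMA q:P. K (-1) q)" unfolding x K_def by auto
    also have "\<dots> \<longleftrightarrow> x \<in> prod.swap ` (SIGMA q:P. K (-1) q)"
      unfolding x by (metis image_iff swap_swap swap_simp)
    finally show "x \<in> (SIGMA p:P. K 1 p) \<longleftrightarrow> x \<in> prod.swap ` (SIGMA q:P. K (-1) q)" .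
  qed
  have "card (SIGMA p:P. K 1 p) = card (SIGMA q:P. K (-1) q)"
    unfolding Sg by (rule card_image) (simp add: inj_on_def)
  hence eq: "(\<Sum>p\<in>P. card (K 1 p)) = (\<Sum>p\<in>P. card (K (-1) p))"
    using card_SigmaI[OF finP, of "K 1"] card_SigmaI[OF finP, of "K (-1)"] Kfin by simp
  have "(\<Sum>p\<in>P. card (K 1 p) + card (K (-1) p)) \<le> (\<Sum>p\<in>P. 2*m - 1)"
  proof (rule sum_mono)
    fix p assume "p \<in> P"
    from partition[OF this] show "card (K 1 p) + card (K (-1) p) \<le> 2*m - 1" by linarith
  qed
  also have "\<dots> = 2*m * (2*m - 1)" using cardP by simp
  finally have "2 * (\<Sum>p\<in>P. card (K 1 p)) \<le> 2 * m * (2*m - 1)" unfolding sum.distrib eq by simp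
  thus ?thesis by simp
qed

lemma NH_bound: "real (card NH) \<le> real m * (real m - 1) ^ 2"
proof -
  have t: "real (card (K 1 p) choose 2) = (real m - 1) * real (card (K 1 p)) - real m * (real m - 1) / 2"
    if p: "p \<in> P" for p
  proof -
    have "real (card (K 1 p)) = real m - 1 \<or> real (card (K 1 p)) = real m" using kval[OF p] m1 by auto
    thus ?thesis unfolding choose2_real
    proof
      assume h: "real (card (K 1 p)) = real m - 1"
      show "real (card (K 1 p)) * (real (card (K 1 p)) - 1) / 2 = (real m - 1) * real (card (K 1 p)) - real m * (real m - 1) / 2"
        by (simp only: h) (simp add: field_simps)
    next
      assume h: "real (card (K 1 p)) = real m"
      show "real (card (K 1 p)) * (real (card (K 1 p)) - 1) / 2 = (real m - 1) * real (card (K 1 p)) - real m * (real m - 1) / 2"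
        by (simp only: h) (simp add: field_simps)
    qed
  qed
  define k where "k p = real (card (K 1 p))" for p
  have "real (card NH) = (\<Sum>p\<in>P. real (card (K 1 p) choose 2))"
    unfolding card_NH by (rule of_nat_sum)
  also have "\<dots> = (\<Sum>p\<in>P. (real m - 1) * k p - real m * (real m - 1) / 2)"
    unfolding k_def by (rule sum.cong[OF refl t])
  also have "\<dots> = (real m - 1) * (\<Sum>p\<in>P. k p) - real (card P) * (real m * (real m - 1) / 2)"
    by (simp add: sum_subtractf sum_distrib_left)
  also have "(\<Sum>p\<in>P. k p) = real (\<Sum>p\<in>P. card (K 1 p))" unfolding k_def by simp
  also have "real (card P) = 2 * real m" using cardP by simp
  finally have e: "real (card NH) = (real m - 1) * real (\<Sum>p\<in>P. card (K 1 p)) - 2 * real m * (real m * (real m - 1) / 2)"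
    by simp
  have "real (\<Sum>p\<in>P. card (K 1 p)) \<le> real (m * (2*m - 1))" using sum_K by (simp only: of_nat_le_iff)
  also have "real (m * (2*m - 1)) = real m * (2 * real m - 1)" using m1 by (simp add: of_nat_diff)
  finally have sk: "real (\<Sum>p\<in>P. card (K 1 p)) \<le> real m * (2 * real m - 1)" .
  have m0: "real m - 1 \<ge> 0" using m1 by simp
  have "(real m - 1) * real (\<Sum>p\<in>P. card (K 1 p)) \<le> (real m - 1) * (real m * (2 * real m - 1))"
    by (rule mult_left_mono[OF sk m0])
  hence "real (card NH) \<le> (real m - 1) * (real m * (2 * real m - 1)) - 2 * real m * (real m * (real m - 1) / 2)"
    unfolding e by linarith
  also have "\<dots> = real m * (real m - 1) ^ 2" by (simp add: field_simps power2_eq_square)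
  finally show ?thesis .
qed

theorem core_main:
  "real (card {T. T \<subseteq> P \<and> card T = 3 \<and> hit2 Y1 Y2 T}) \<ge> real ((m + 1) * m * (m - 1)) / 3"
proof -
  define All where "All = {T. T \<subseteq> P \<and> card T = 3}"
  have H: "{T. T \<subseteq> P \<and> card T = 3 \<and> hit2 Y1 Y2 T} = All - NH"
  proof (rule set_eqI)
    fix T
    show "T \<in> {T. T \<subseteq> P \<and> card T = 3 \<and> hit2 Y1 Y2 T} \<longleftrightarrow> T \<in> All - NH"
    proof (cases "T \<subseteq> P \<and> card T = 3")
      case True
      show ?thesis
      proof (cases "\<exists>p. src T p")
        case True2: True
        then obtain p where "src T p" by blast
        hence "\<not> hit2 Y1 Y2 T" using nohit_src True by blast
        thus ?thesis using True2 unfolding All_def NH_def by blast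
      next
        case False
        hence "hit2 Y1 Y2 T" using src_hit True by blast
        thus ?thesis using False True unfolding All_def NH_def by blast
      qed
    next
      case False
      thus ?thesis unfolding All_def by blast
    qed
  qed
  have sub: "NH \<subseteq> All" unfolding All_def NH_def by blast
  have fA: "finite All" unfolding All_def using finP by auto
  have fN: "finite NH" using sub fA finite_subset by blast
  have cA: "card All = (2*m) choose 3" unfolding All_def using n_subsets[OF finP, of 3] cardP by simp
  have le: "card NH \<le> card All" using card_mono[OF fA sub] .
  have "real (card (All - NH)) = real (card All) - real (card NH)"
    using card_Diff_subset[OF fN sub] le by (simp add: of_nat_diff)
  also have "\<dots> \<ge> real ((2*m) choose 3) - real m * (real m - 1) ^ 2" using NH_bound cA by simp
  finally have "real (card (All - NH)) \<ge> real ((2*m) choose 3) - real m * (real m - 1) ^ 2" .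
  moreover have "real ((2*m) choose 3) - real m * (real m - 1) ^ 2 = real ((m + 1) * m * (m - 1)) / 3"
    unfolding choose3_real using m1 by (simp add: of_nat_diff field_simps power2_eq_square)
  ultimately show ?thesis unfolding H by simp
qed
end


lemma span2: "span {a, b} = {u *\<^sub>R a + v *\<^sub>R b | u v. True}"
proof -
  have "span {a, b} = {x. \<exists>k. x - k *\<^sub>R a \<in> span {b}}" by (rule span_insert)
  also have "\<dots> = {u *\<^sub>R a + v *\<^sub>R b | u v. True}"
    unfolding span_singleton
  proof (rule set_eqI, rule iffI)
    fix x assume "x \<in> {x. \<exists>k. x - k *\<^sub>R a \<in> range (\<lambda>k. k *\<^sub>R b)}"
    then obtain k j where "x - k *\<^sub>R a = j *\<^sub>R b" by auto
    hence "x = k *\<^sub>R a + j *\<^sub>R b" by (simp add: algebra_simps)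
    thus "x \<in> {u *\<^sub>R a + v *\<^sub>R b | u v. True}" by blast
  next
    fix x assume "x \<in> {u *\<^sub>R a + v *\<^sub>R b | u v. True}"
    then obtain u v where "x = u *\<^sub>R a + v *\<^sub>R b" by blast
    hence "x - u *\<^sub>R a = v *\<^sub>R b" by simp
    thus "x \<in> {x. \<exists>k. x - k *\<^sub>R a \<in> range (\<lambda>k. k *\<^sub>R b)}" by blast
  qed
  finally show ?thesis .
qed

lemma seg_pos: "0 \<le> t \<Longrightarrow> t \<le> 1 \<Longrightarrow> a > 0 \<Longrightarrow> b > 0 \<Longrightarrow> (1-t)*a + t*b > (0::real)"
proof -
  assume h: "0 \<le> t" "t \<le> 1" "a > 0" "b > 0"
  have "(1-t)*a \<ge> 0" using h by simp
  show ?thesis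
  proof (cases "t = 0")
    case True thus ?thesis using h by simp
  next
    case False
    hence "t*b > 0" using h by simp
    thus ?thesis using \<open>(1-t)*a \<ge> 0\<close> by linarith
  qed
qed

lemma aff3: "u + v + w = 1 \<Longrightarrow> a \<bullet> (u *\<^sub>R x + v *\<^sub>R y + w *\<^sub>R z) - b = u * (a \<bullet> x - b) + v * (a \<bullet> y - b) + w * (a \<bullet> z - (b::real))"
proof -
  assume s: "u + v + w = 1"
  have "b = (u+v+w)*b" using s by simp
  hence "a \<bullet> (u *\<^sub>R x + v *\<^sub>R y + w *\<^sub>R z) - b = a \<bullet> (u *\<^sub>R x + v *\<^sub>R y + w *\<^sub>R z) - (u+v+w)*b" by simp
  thus ?thesis by (simp add: inner_add_right algebra_simps)
qed

theorem corollary17: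
  fixes h :: "nat \<Rightarrow> 'a::euclidean_space set"
    and l :: "'a set"
    and P :: "'a set"
    and m :: nat
  assumes "DIM('a) \<ge> 2"
    and "m \<ge> 1"
    and "affine l" and "aff_dim l = int DIM('a) - 2"
    and "\<forall>i<m. is_hyperplane (h i)"
    and "inj_on h {..<m}"
    and "\<forall>i<m. l \<subseteq> h i"
    and "card (components (- (\<Union>i<m. h i))) = 2 * m"
    and "finite P" and "card P = 2 * m"
    and "P \<subseteq> - (\<Union>i<m. h i)"
    and "\<forall>C\<in>components (- (\<Union>i<m. h i)). card (P \<inter> C) = 1"
  shows "real (card {T. T \<subseteq> P \<and> card T = 3 \<and> convex hull T \<inter> l \<noteq> {}})
           \<ge> real ((m + 1) * m * (m - 1)) / 3"
proof (cases "m = 1")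
  case True
  then show ?thesis by simp
next
  case False
  note dimA = assms(1) and m1 = assms(2) and affl = assms(3) and adl = assms(4) and hyp = assms(5)
    and injh = assms(6) and lh = assms(7) and finP = assms(9) and cardP = assms(10)
    and PU = assms(11) and comp1 = assms(12)
  have m2: "m \<ge> 2" using False m1 by simp
  have "\<forall>i\<in>{..<m}. \<exists>ab. fst ab \<noteq> 0 \<and> h i = {x. fst ab \<bullet> x = snd ab}"
    using hyp unfolding is_hyperplane_def by force
  then obtain f where f: "\<And>i. i < m \<Longrightarrow> fst (f i) \<noteq> 0 \<and> h i = {x. fst (f i) \<bullet> x = snd (f i)}"
    using bchoice[of "{..<m}"] by (metis lessThan_iff)
  define A where "A i = fst (f i)" for i
  define B where "B i = snd (f i)" for i
  have Anz: "A i \<noteq> 0" and hA: "h i = {x. A i \<bullet> x = B i}" if "i < m" for i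
    using f[OF that] unfolding A_def B_def by auto
  have "l \<noteq> {}"
  proof
    assume "l = {}"
    hence "aff_dim l = -1" by simp
    thus False using adl dimA by simp
  qed
  then obtain z where zl: "z \<in> l" by blast
  have Al: "A i \<bullet> x = B i" if "i < m" "x \<in> l" for i x
    using lh that hA[OF that(1)] by blast
  have Bz: "B i = A i \<bullet> z" if "i < m" for i using Al[OF that zl] by simp
  define S where "S = (\<lambda>x. x - z) ` l"
  have subS: "subspace S" unfolding S_def by (rule affine_diffs_subspace_subtract[OF affl zl])
  have "aff_dim l = int (dim S)" unfolding S_def
    by (rule aff_dim_eq_dim_subtract) (simp add: zl hull_inc)
  hence dimS: "dim S = DIM('a) - 2" using adl dimA by linarith
  have AS: "A i \<bullet> s = 0" if i: "i < m" and s: "s \<in> S" for i s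
  proof -
    obtain x where x: "x \<in> l" "s = x - z" using s unfolding S_def by blast
    show ?thesis using Al[OF i x(1)] Al[OF i zl] x(2) by (simp add: inner_diff_right)
  qed
  have A01: "A 0 \<noteq> A 1"
  proof
    assume e: "A 0 = A 1"
    hence "B 0 = B 1" using Bz m2 by simp
    hence "h 0 = h 1" using hA e m2 by simp
    thus False using inj_onD[OF injh, of 0 1] m2 by simp
  qed
  have indep: "independent {A 0, A 1}"
  proof -
    have "A 0 \<notin> span {A 1}"
    proof
      assume "A 0 \<in> span {A 1}"
      then obtain k where k: "A 0 = k *\<^sub>R A 1" unfolding span_singleton by blast
      have k0: "k \<noteq> 0" using k Anz[of 0] m2 by auto
      have "B 0 = k * B 1" using Bz m2 k by (simp add: inner_scaleR_left)
      hence "h 0 = h 1" using hA m2 k k0 by (auto simp: inner_scaleR_left)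
      thus False using inj_onD[OF injh, of 0 1] m2 by simp
    qed
    moreover have "independent {A 1}" using Anz[of 1] m2 by simp
    ultimately show ?thesis using A01 by (simp add: independent_insert)
  qed
  define U where "U = span {A 0, A 1}"
  have subU: "subspace U" unfolding U_def by simp
  have dimU: "dim U = 2" unfolding U_def using dim_eq_card_independent[OF indep] A01 by simp
  define W where "W = {y. \<forall>x\<in>U. orthogonal x y}"
  have "dim {y \<in> UNIV. \<forall>x\<in>U. orthogonal x y} + dim U = dim (UNIV :: 'a set)"
    by (rule dim_subspace_orthogonal_to_vectors[OF subU subspace_UNIV]) simp
  hence dimW: "dim W = DIM('a) - 2" unfolding W_def using dimU by simp
  have subW: "subspace W" unfolding W_def orthogonal_def
    by (auto simp: subspace_def inner_add_right)
  have SW: "S \<subseteq> W"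
  proof
    fix s assume s: "s \<in> S"
    show "s \<in> W" unfolding W_def U_def span2
      using AS[OF _ s] m2 by (auto simp: orthogonal_def inner_add_left)
  qed
  have SeqW: "S = W" by (rule subspace_dim_equal[OF subS subW SW]) (simp add: dimS dimW)
  have WU: "W = orthogonal_comp U" unfolding W_def orthogonal_comp_def ..
  have AU: "A i \<in> U" if i: "i < m" for i
  proof -
    have "A i \<in> orthogonal_comp W"
      unfolding orthogonal_comp_def orthogonal_def using AS[OF i] SeqW by (auto simp: inner_commute)
    thus ?thesis unfolding WU orthogonal_comp_self[OF subU] .
  qed
  have "\<forall>i\<in>{..<m}. \<exists>uv. A i = fst uv *\<^sub>R A 0 + snd uv *\<^sub>R A 1"
    using AU unfolding U_def span2 by fastforce
  then obtain g where g: "\<And>i. i < m \<Longrightarrow> A i = fst (g i) *\<^sub>R A 0 + snd (g i) *\<^sub>R A 1"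
    using bchoice[of "{..<m}"] by (metis lessThan_iff)
  define u where "u i = fst (g i)" for i
  define v where "v i = snd (g i)" for i
  define Y1 where "Y1 x = A 0 \<bullet> x - B 0" for x
  define Y2 where "Y2 x = A 1 \<bullet> x - B 1" for x
  have FY: "A i \<bullet> x - B i = u i * Y1 x + v i * Y2 x" if i: "i < m" for i x
  proof -
    have "A i \<bullet> x - B i = A i \<bullet> (x - z)" using Bz[OF i] by (simp add: inner_diff_right)
    also have "\<dots> = u i * (A 0 \<bullet> (x - z)) + v i * (A 1 \<bullet> (x - z))"
      unfolding u_def v_def g[OF i] by (simp add: inner_add_left)
    also have "\<dots> = u i * Y1 x + v i * Y2 x" unfolding Y1_def Y2_def using Bz m2 by (simp add: inner_diff_right)
    finally show ?thesis .
  qed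
  have lY: "x \<in> l \<longleftrightarrow> Y1 x = 0 \<and> Y2 x = 0" for x
  proof -
    have "x \<in> l \<longleftrightarrow> x - z \<in> S" unfolding S_def by force
    also have "\<dots> \<longleftrightarrow> x - z \<in> W" using SeqW by simp
    also have "\<dots> \<longleftrightarrow> A 0 \<bullet> (x - z) = 0 \<and> A 1 \<bullet> (x - z) = 0"
    proof
      assume H: "x - z \<in> W"
      have "A 0 \<in> U" "A 1 \<in> U" unfolding U_def by (simp_all add: span_base)
      thus "A 0 \<bullet> (x - z) = 0 \<and> A 1 \<bullet> (x - z) = 0" using H unfolding W_def orthogonal_def by blast
    next
      assume H: "A 0 \<bullet> (x - z) = 0 \<and> A 1 \<bullet> (x - z) = 0"
      show "x - z \<in> W" unfolding W_def U_def span2 orthogonal_def using H by (auto simp: inner_add_left)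
    qed
    also have "\<dots> \<longleftrightarrow> Y1 x = 0 \<and> Y2 x = 0" unfolding Y1_def Y2_def using Bz m2 by (simp add: inner_diff_right)
    finally show ?thesis .
  qed
  interpret c: core P Y1 Y2 u v m
  proof
    show "1 \<le> m" by (rule m1)
    show "finite P" by (rule finP)
    show "card P = 2 * m" by (rule cardP)
  next
    fix p i assume p: "p \<in> P" and i: "i < m"
    have "p \<notin> h i" using PU p i by blast
    thus "u i * Y1 p + v i * Y2 p \<noteq> 0" using FY[OF i, of p] hA[OF i] by auto
  next
    fix p q assume p: "p \<in> P" and q: "q \<in> P"
      and sg: "\<And>i. i < m \<Longrightarrow> (0 < u i * Y1 p + v i * Y2 p) = (0 < u i * Y1 q + v i * Y2 q)"
    let ?C = "- (\<Union>i<m. h i)"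
    have seg: "closed_segment p q \<subseteq> ?C"
    proof
      fix x assume "x \<in> closed_segment p q"
      then obtain t where t: "0 \<le> t" "t \<le> 1" and x: "x = (1 - t) *\<^sub>R p + t *\<^sub>R q"
        unfolding closed_segment_def by blast
      have "x \<notin> h i" if i: "i < m" for i
      proof -
        have np: "A i \<bullet> p - B i \<noteq> 0" and nq: "A i \<bullet> q - B i \<noteq> 0" using PU p q i hA[OF i] by auto
        have same: "(A i \<bullet> p - B i > 0) = (A i \<bullet> q - B i > 0)" using sg[OF i] FY[OF i] by simp
        have ex: "A i \<bullet> x - B i = (1 - t) * (A i \<bullet> p - B i) + t * (A i \<bullet> q - B i)"
          using aff3[of "1 - t" t 0 "A i" p q 0 "B i"] x by simp
        have "A i \<bullet> x - B i \<noteq> 0"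
        proof (cases "A i \<bullet> p - B i > 0")
          case True
          have q0: "A i \<bullet> q - B i > 0" using same True by simp
          from seg_pos[OF t True q0] show ?thesis using ex by linarith
        next
          case False
          hence a: "- (A i \<bullet> p - B i) > 0" using np by linarith
          hence "- (A i \<bullet> q - B i) > 0" using same nq by linarith
          from seg_pos[OF t a this] show ?thesis using ex by linarith
        qed
        thus ?thesis using hA[OF i] by simp
      qed
      thus "x \<in> ?C" by blast
    qed
    have pC: "p \<in> ?C" using PU p by blast
    have Cc: "connected_component_set ?C p \<in> components ?C" by (rule componentsI[OF pC])
    have "connected_component ?C p q"
      by (rule connected_componentI[OF connected_segment seg]) auto
    hence qin: "q \<in> connected_component_set ?C p" by simp
    have pin: "p \<in> connected_component_set ?C p" using pC by simp
    have "card (P \<inter> connected_component_set ?C p) = 1" using comp1 Cc by blast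
    then obtain w where w: "P \<inter> connected_component_set ?C p = {w}" by (rule card_1_singletonE)
    have "p \<in> P \<inter> connected_component_set ?C p" using p pin by (rule IntI)
    hence "p = w" unfolding w by simp
    moreover have "q \<in> P \<inter> connected_component_set ?C p" using q qin by (rule IntI)
    hence "q = w" unfolding w by simp
    ultimately show "p = q" by simp
  qed
  have hit: "convex hull T \<inter> l \<noteq> {} \<longleftrightarrow> hit2 Y1 Y2 T" if T3: "card T = 3" for T
  proof
    assume "convex hull T \<inter> l \<noteq> {}"
    then obtain w where w: "w \<in> convex hull T" "w \<in> l" by blast
    obtain x y z' where T: "T = {x,y,z'}" using T3 card_3_iff[of T] by auto
    obtain a b c where abc: "0 \<le> a" "0 \<le> b" "0 \<le> c" "a + b + c = 1" and wd: "w = a *\<^sub>R x + b *\<^sub>R y + c *\<^sub>R z'"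
      using w(1) unfolding T convex_hull_3 by blast
    have "Y1 w = a * Y1 x + b * Y1 y + c * Y1 z'" unfolding Y1_def wd by (rule aff3[OF abc(4)])
    moreover have "Y2 w = a * Y2 x + b * Y2 y + c * Y2 z'" unfolding Y2_def wd by (rule aff3[OF abc(4)])
    ultimately show "hit2 Y1 Y2 T" unfolding hit2_def using lY[of w] w(2) abc T by metis
  next
    assume "hit2 Y1 Y2 T"
    then obtain x y z' a b c where T: "T = {x,y,z'}" and abc: "0 \<le> a" "0 \<le> b" "0 \<le> c" "a + b + c = 1"
      and e1: "a * Y1 x + b * Y1 y + c * Y1 z' = 0" and e2: "a * Y2 x + b * Y2 y + c * Y2 z' = 0"
      unfolding hit2_def by blast
    define w where "w = a *\<^sub>R x + b *\<^sub>R y + c *\<^sub>R z'"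
    have "w \<in> convex hull T" unfolding T convex_hull_3 w_def using abc by blast
    moreover have "Y1 w = 0" unfolding Y1_def w_def aff3[OF abc(4)] using e1 unfolding Y1_def .
    moreover have "Y2 w = 0" unfolding Y2_def w_def aff3[OF abc(4)] using e2 unfolding Y2_def .
    ultimately show "convex hull T \<inter> l \<noteq> {}" using lY[of w] by blast
  qed
  have "{T. T \<subseteq> P \<and> card T = 3 \<and> convex hull T \<inter> l \<noteq> {}} = {T. T \<subseteq> P \<and> card T = 3 \<and> hit2 Y1 Y2 T}"
    using hit by blast
  thus ?thesis using c.core_main by simp
qed

end
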